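(* Let $G$ and $H$ be groups and $f:G\to H$ a function such that for all $x,x'\in G$ there is $h\in H$ (depending on $x,x'$) with $f(xx')=f(x)^h\,f(x')$. Let $G_0$, $G_1$ be groups, $f_0:G_0\to H$ and $f_1:G_1\to H$ functions, $c\in H$, and $k\ge2$ an integer. If the set $\{(x_0,x,x_1)\in G_0\times G\times G_1: f_0(x_0)\,f(x)\,f_1(x_1)=c\}$ is $k$-large in $G_0\times G\times G_1$, then $f(g)=1$ for all $g\in G$, and the set $\{(x_0,x_1)\in G_0\times G_1:f_0(x_0)\,f_1(x_1)=c\}$ is $k$-large in $G_0\times G_1$.
   Context: $a^h=h^{-1}ah$. A subset $X$ of a group $K$ is $k$-large in $K$ if the intersection of any $k$ left translates $a_1X\cap\dots\cap a_kX$ ($a_i\in K$) is non-empty. *)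

theory Defs
  imports "HOL-Algebra.Algebra"
begin

definition conj_by :: "('a, 'm) monoid_scheme \<Rightarrow> 'a \<Rightarrow> 'a \<Rightarrow> 'a" where
  "conj_by H a h = inv\<^bsub>H\<^esub> h \<otimes>\<^bsub>H\<^esub> a \<otimes>\<^bsub>H\<^esub> h"

definition k_large :: "nat \<Rightarrow> ('a, 'm) monoid_scheme \<Rightarrow> 'a set \<Rightarrow> bool" where
  "k_large k Grp S \<longleftrightarrow>
     (\<forall>a. (\<forall>i<k. a i \<in> carrier Grp) \<longrightarrow> (\<exists>y. \<forall>i<k. y \<in> l_coset Grp (a i) S))"

end

theory Submission
  imports Defs
begin

lemma conj_one:
  fixes H (structure)
  assumes "group H" "a \<in> carrier H" "h \<in> carrier H" "conj_by H a h = \<one>\<^bsub>H\<^esub>"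
  shows "a = \<one>\<^bsub>H\<^esub>"
proof -
  interpret group H by fact
  have "inv h \<otimes> a \<otimes> h = \<one>" using assms(4) by (simp add: conj_by_def)
  hence "inv h \<otimes> a \<otimes> h \<otimes> inv h = inv h" using assms by simp
  hence "inv h \<otimes> a = inv h" using assms by (simp add: m_assoc)
  hence "h \<otimes> (inv h \<otimes> a) = h \<otimes> inv h" by simp
  thus ?thesis using assms by (simp flip: m_assoc)
qed

theorem theorem5p1:
  fixes G :: "('g, 'mg) monoid_scheme" and H :: "('h, 'mh) monoid_scheme"
    and G0 :: "('a, 'ma) monoid_scheme" and G1 :: "('b, 'mb) monoid_scheme"
    and f :: "'g \<Rightarrow> 'h" and f0 :: "'a \<Rightarrow> 'h" and f1 :: "'b \<Rightarrow> 'h"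
    and c :: 'h and k :: nat
  assumes "group G" and "group H" and "group G0" and "group G1"
    and "f \<in> carrier G \<rightarrow> carrier H"
    and "\<forall>x\<in>carrier G. \<forall>x'\<in>carrier G. \<exists>h\<in>carrier H.
           f (x \<otimes>\<^bsub>G\<^esub> x') = conj_by H (f x) h \<otimes>\<^bsub>H\<^esub> f x'"
    and "f0 \<in> carrier G0 \<rightarrow> carrier H"
    and "f1 \<in> carrier G1 \<rightarrow> carrier H"
    and "c \<in> carrier H"
    and "k \<ge> 2"
    and "k_large k (G0 \<times>\<times> G \<times>\<times> G1)
           {(x0, x, x1). x0 \<in> carrier G0 \<and> x \<in> carrier G \<and> x1 \<in> carrier G1 \<and>
              f0 x0 \<otimes>\<^bsub>H\<^esub> f x \<otimes>\<^bsub>H\<^esub> f1 x1 = c}"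
  shows "(\<forall>g\<in>carrier G. f g = \<one>\<^bsub>H\<^esub>) \<and>
         k_large k (G0 \<times>\<times> G1)
           {(x0, x1). x0 \<in> carrier G0 \<and> x1 \<in> carrier G1 \<and>
              f0 x0 \<otimes>\<^bsub>H\<^esub> f1 x1 = c}"
proof -
  interpret G: group G by fact
  interpret H: group H by fact
  interpret G0: group G0 by fact
  interpret G1: group G1 by fact
  define S where "S = {(x0, x, x1). x0 \<in> carrier G0 \<and> x \<in> carrier G \<and> x1 \<in> carrier G1 \<and>
              f0 x0 \<otimes>\<^bsub>H\<^esub> f x \<otimes>\<^bsub>H\<^esub> f1 x1 = c}"
  have L: "\<And>a. (\<forall>i<k. a i \<in> carrier (G0 \<times>\<times> G \<times>\<times> G1)) \<Longrightarrow>
      (\<exists>y. \<forall>i<k. y \<in> l_coset (G0 \<times>\<times> G \<times>\<times> G1) (a i) S)"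
    using assms(11) unfolding k_large_def S_def by blast
  have f1': "\<And>g. g \<in> carrier G \<Longrightarrow> f g = \<one>\<^bsub>H\<^esub>"
  proof -
    fix g assume g: "g \<in> carrier G"
    define a where "a = (\<lambda>i::nat. if i = 1 then (\<one>\<^bsub>G0\<^esub>, g, \<one>\<^bsub>G1\<^esub>) else (\<one>\<^bsub>G0\<^esub>, \<one>\<^bsub>G\<^esub>, \<one>\<^bsub>G1\<^esub>))"
    have "\<forall>i<k. a i \<in> carrier (G0 \<times>\<times> G \<times>\<times> G1)" using g by (simp add: a_def)
    then obtain y where y: "\<forall>i<k. y \<in> l_coset (G0 \<times>\<times> G \<times>\<times> G1) (a i) S" using L by blast
    have "y \<in> l_coset (G0 \<times>\<times> G \<times>\<times> G1) (a 0) S" using y assms(10) by simp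
    then obtain s0 s s1 where s: "(s0, s, s1) \<in> S" and ys: "y = (s0, s, s1)"
      unfolding l_coset_def a_def S_def by auto
    have "y \<in> l_coset (G0 \<times>\<times> G \<times>\<times> G1) (a 1) S" using y assms(10) by simp
    then obtain t0 t t1 where t: "(t0, t, t1) \<in> S" and yt: "y = (t0, g \<otimes>\<^bsub>G\<^esub> t, t1)"
      unfolding l_coset_def a_def S_def by auto
    have tc: "t \<in> carrier G" and t0: "t0 \<in> carrier G0" and t1: "t1 \<in> carrier G1"
      and eqt: "f0 t0 \<otimes>\<^bsub>H\<^esub> f t \<otimes>\<^bsub>H\<^esub> f1 t1 = c" using t by (auto simp: S_def)
    have eqs: "f0 t0 \<otimes>\<^bsub>H\<^esub> f (g \<otimes>\<^bsub>G\<^esub> t) \<otimes>\<^bsub>H\<^esub> f1 t1 = c" using s ys yt by (auto simp: S_def)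
    obtain h where h: "h \<in> carrier H" and fh: "f (g \<otimes>\<^bsub>G\<^esub> t) = conj_by H (f g) h \<otimes>\<^bsub>H\<^esub> f t"
      using assms(6) g tc by blast
    have fg: "f g \<in> carrier H" "f t \<in> carrier H" "f (g \<otimes>\<^bsub>G\<^esub> t) \<in> carrier H"
      using assms(5) g tc by auto
    have f0c: "f0 t0 \<in> carrier H" using assms(7) t0 by auto
    have f1c: "f1 t1 \<in> carrier H" using assms(8) t1 by auto
    have cb: "conj_by H (f g) h \<in> carrier H" using fg h by (simp add: conj_by_def)
    have "f (g \<otimes>\<^bsub>G\<^esub> t) = f t"
      using eqs eqt fg f0c f1c H.l_cancel H.r_cancel by (metis H.m_closed)
    hence "conj_by H (f g) h \<otimes>\<^bsub>H\<^esub> f t = \<one>\<^bsub>H\<^esub> \<otimes>\<^bsub>H\<^esub> f t" using fh fg by simp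
    hence "conj_by H (f g) h = \<one>\<^bsub>H\<^esub>" using cb fg H.r_cancel by (metis H.one_closed)
    thus "f g = \<one>\<^bsub>H\<^esub>" using conj_one[OF assms(2) fg(1) h] by simp
  qed
  have "k_large k (G0 \<times>\<times> G1)
           {(x0, x1). x0 \<in> carrier G0 \<and> x1 \<in> carrier G1 \<and>
              f0 x0 \<otimes>\<^bsub>H\<^esub> f1 x1 = c}"
    unfolding k_large_def
  proof (intro allI impI)
    fix a assume a: "\<forall>i<k. a i \<in> carrier (G0 \<times>\<times> G1)"
    define b where "b = (\<lambda>i. (fst (a i), \<one>\<^bsub>G\<^esub>, snd (a i)))"
    have "\<forall>i<k. b i \<in> carrier (G0 \<times>\<times> G \<times>\<times> G1)" using a by (auto simp: b_def mem_Times_iff)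
    then obtain y where y: "\<forall>i<k. y \<in> l_coset (G0 \<times>\<times> G \<times>\<times> G1) (b i) S" using L by blast
    show "\<exists>y. \<forall>i<k. y \<in> l_coset (G0 \<times>\<times> G1) (a i) {(x0, x1). x0 \<in> carrier G0 \<and> x1 \<in> carrier G1 \<and>
              f0 x0 \<otimes>\<^bsub>H\<^esub> f1 x1 = c}"
    proof (intro exI allI impI)
      fix i assume i: "i < k"
      obtain z where z: "z \<in> S" and yz: "y = b i \<otimes>\<^bsub>G0 \<times>\<times> G \<times>\<times> G1\<^esub> z"
        using y i unfolding l_coset_def by blast
      obtain s0 s s1 where zs: "z = (s0, s, s1)" by (cases z) auto
      have s: "(s0, s, s1) \<in> S" and ys: "y = b i \<otimes>\<^bsub>G0 \<times>\<times> G \<times>\<times> G1\<^esub> (s0, s, s1)"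
        using z yz zs by auto
      have sc: "s0 \<in> carrier G0" "s \<in> carrier G" "s1 \<in> carrier G1"
        and eq: "f0 s0 \<otimes>\<^bsub>H\<^esub> f s \<otimes>\<^bsub>H\<^esub> f1 s1 = c" using s by (auto simp: S_def)
      have "f0 s0 \<in> carrier H" using assms(7) sc by auto
      hence eq2: "f0 s0 \<otimes>\<^bsub>H\<^esub> f1 s1 = c" using eq f1'[OF sc(2)] by simp
      have "(fst y, snd (snd y)) = a i \<otimes>\<^bsub>G0 \<times>\<times> G1\<^esub> (s0, s1)"
        using ys by (cases "a i") (simp add: b_def)
      thus "(fst y, snd (snd y)) \<in> l_coset (G0 \<times>\<times> G1) (a i) {(x0, x1). x0 \<in> carrier G0 \<and> x1 \<in> carrier G1 \<and>
              f0 x0 \<otimes>\<^bsub>H\<^esub> f1 x1 = c}"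
        unfolding l_coset_def using sc eq2 by blast
    qed
  qed
  thus ?thesis using f1' by blast
qed

end
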